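(* Let $\alpha_i,\beta_i,\gamma_i,\delta_i\in(0,\pi)$ satisfy $\alpha_i\pm\beta_i\pm\gamma_i\pm\delta_i\not\equiv0\pmod{2\pi}$ for all choices of signs. Then $\sin\overline{\alpha}_i,\sin\overline{\beta}_i,\sin\overline{\gamma}_i,\sin\overline{\delta}_i\neq0$ (so $a_i,b_i,c_i,d_i$ are well-defined) and \[a_ib_i,\ a_ic_i,\ a_id_i,\ b_ic_i,\ b_id_i,\ c_id_i,\ M_i\notin\{0,1\}.\]
   Context: $\sigma_i=(\alpha_i+\beta_i+\gamma_i+\delta_i)/2$, $\overline{\alpha}_i=\sigma_i-\alpha_i$, $\overline{\beta}_i=\sigma_i-\beta_i$, $\overline{\gamma}_i=\sigma_i-\gamma_i$, $\overline{\delta}_i=\sigma_i-\delta_i$; $a_i=\sin\alpha_i/\sin\overline{\alpha}_i$, $b_i=\sin\beta_i/\sin\overline{\beta}_i$, $c_i=\sin\gamma_i/\sin\overline{\gamma}_i$, $d_i=\sin\delta_i/\sin\overline{\delta}_i$, $M_i=a_ib_ic_id_i$. *)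

theory Defs
  imports Complex_Main
begin

definition sig :: "real \<Rightarrow> real \<Rightarrow> real \<Rightarrow> real \<Rightarrow> real" where
  "sig \<alpha> \<beta> \<gamma> \<delta> = (\<alpha> + \<beta> + \<gamma> + \<delta>) / 2"

definition ratio :: "real \<Rightarrow> real \<Rightarrow> real" where
  "ratio s x = sin x / sin (s - x)"

end

theory Submission
  imports Defs
begin

lemma coseq:
  fixes x y :: real
  assumes "cos x = cos y"
  shows "\<exists>k::int. x + y = 2*pi*of_int k \<or> x - y = 2*pi*of_int k"
proof -
  have "2 * sin ((x + y) / 2) * sin ((y - x) / 2) = 0" using cos_diff_cos[of x y] assms by simp
  then have "sin ((x + y) / 2) = 0 \<or> sin ((y - x) / 2) = 0" by simp
  then show ?thesis
  proof
    assume "sin ((x + y) / 2) = 0"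
    then obtain i :: int where "(x+y)/2 = of_int i * pi" by (auto simp: sin_zero_iff_int2)
    then have "x + y = 2*pi*of_int i" by (simp add: field_simps)
    then show ?thesis by blast
  next
    assume "sin ((y - x) / 2) = 0"
    then obtain i :: int where "(y-x)/2 = of_int i * pi" by (auto simp: sin_zero_iff_int2)
    then have "x - y = 2*pi*of_int (-i)" by (simp add: field_simps)
    then show ?thesis by blast
  qed
qed

lemma pairlem:
  fixes s x y z w :: real
  assumes "sin x \<noteq> 0" "sin y \<noteq> 0" "sin (s - x) \<noteq> 0" "sin (s - y) \<noteq> 0"
    and "x + y + z + w = 2 * s"
    and "\<And>k::int. x + y + z + w \<noteq> 2*pi*of_int k" "\<And>k::int. x + y - z - w \<noteq> 2*pi*of_int k"
  shows "ratio s x * ratio s y \<notin> {0, 1}"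
proof
  assume h: "ratio s x * ratio s y \<in> {0, 1}"
  have "ratio s x * ratio s y \<noteq> 0" using assms(1-4) by (simp add: ratio_def)
  with h have "ratio s x * ratio s y = 1" by simp
  then have e: "sin x * sin y = sin (s - x) * sin (s - y)" using assms(1-4) by (simp add: ratio_def field_simps)
  have "sin (s - x) * sin (s - y) = (cos (y - x) - cos (z + w)) / 2"
    using sin_times_sin[of "s-x" "s-y"] assms(5)
    by (smt (verit) cos_minus minus_diff_eq)
  moreover have "sin x * sin y = (cos (y - x) - cos (x + y)) / 2"
    using sin_times_sin[of x y] by (metis cos_minus minus_diff_eq)
  ultimately have "cos (x + y) = cos (z + w)" using e by simp
  from coseq[OF this] obtain k :: int where "x + y + (z + w) = 2*pi*of_int k \<or> x + y - (z + w) = 2*pi*of_int k" by blast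
  then show False using assms(6,7)[of k] by (auto simp: algebra_simps)
qed

lemma quadlem:
  fixes s x y z w :: real
  assumes "sin x \<noteq> 0" "sin y \<noteq> 0" "sin z \<noteq> 0" "sin w \<noteq> 0"
    "sin (s - x) \<noteq> 0" "sin (s - y) \<noteq> 0" "sin (s - z) \<noteq> 0" "sin (s - w) \<noteq> 0"
    and "x + y + z + w = 2 * s"
    and "\<And>k::int. x + y + z + w \<noteq> 2*pi*of_int k" "\<And>k::int. x + y - z - w \<noteq> 2*pi*of_int k"
    "\<And>k::int. x - y + z - w \<noteq> 2*pi*of_int k" "\<And>k::int. x - y - z + w \<noteq> 2*pi*of_int k"
  shows "ratio s x * ratio s y * ratio s z * ratio s w \<notin> {0, 1}"
proof
  assume h: "ratio s x * ratio s y * ratio s z * ratio s w \<in> {0, 1}"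
  have "ratio s x * ratio s y * ratio s z * ratio s w \<noteq> 0" using assms(1-8) by (simp add: ratio_def)
  with h have "ratio s x * ratio s y * ratio s z * ratio s w = 1" by simp
  then have e: "(sin x * sin y) * (sin z * sin w) = (sin (s - x) * sin (s - y)) * (sin (s - z) * sin (s - w))"
    using assms(1-8) by (simp add: ratio_def field_simps)
  define p where "p = cos (x - y)"
  define q where "q = cos (z - w)"
  define u where "u = cos (x + y)"
  define v where "v = cos (z + w)"
  have 1: "sin (s - x) * sin (s - y) = (p - v) / 2"
    using sin_times_sin[of "s-x" "s-y"] assms(9) unfolding p_def v_def
    by (smt (verit) cos_minus minus_diff_eq)
  have 2: "sin (s - z) * sin (s - w) = (q - u) / 2"
    using sin_times_sin[of "s-z" "s-w"] assms(9) unfolding q_def u_def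
    by (smt (verit) cos_minus minus_diff_eq)
  have 3: "sin x * sin y = (p - u) / 2" using sin_times_sin[of x y] unfolding p_def u_def by simp
  have 4: "sin z * sin w = (q - v) / 2" using sin_times_sin[of z w] unfolding q_def v_def by simp
  have "(p - u) / 2 * ((q - v) / 2) = (p - v) / 2 * ((q - u) / 2)" using e unfolding 1 2 3 4 .
  then have "(p - u) * (q - v) = (p - v) * (q - u)" by (simp add: field_simps)
  then have "(p - q) * (u - v) = 0" by (simp add: algebra_simps)
  then have "p = q \<or> u = v" by simp
  then show False
  proof
    assume "p = q"
    from coseq[OF this[unfolded p_def q_def]] obtain k :: int where
      "x - y + (z - w) = 2*pi*of_int k \<or> x - y - (z - w) = 2*pi*of_int k" by blast
    then show False using assms(12,13)[of k] by (auto simp: algebra_simps)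
  next
    assume "u = v"
    from coseq[OF this[unfolded u_def v_def]] obtain k :: int where
      "x + y + (z + w) = 2*pi*of_int k \<or> x + y - (z + w) = 2*pi*of_int k" by blast
    then show False using assms(10,11)[of k] by (auto simp: algebra_simps)
  qed
qed

theorem lemma2:
  fixes \<alpha> \<beta> \<gamma> \<delta> :: real
  assumes range: "\<alpha> \<in> {0<..<pi}" "\<beta> \<in> {0<..<pi}" "\<gamma> \<in> {0<..<pi}" "\<delta> \<in> {0<..<pi}"
    and nondeg: "\<And>s1 s2 s3 (k::int). s1 \<in> {1, -1} \<Longrightarrow> s2 \<in> {1, -1} \<Longrightarrow> s3 \<in> {1, -1} \<Longrightarrow>
        \<alpha> + s1 * \<beta> + s2 * \<gamma> + s3 * \<delta> \<noteq> 2 * pi * of_int k"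
  defines "a \<equiv> ratio (sig \<alpha> \<beta> \<gamma> \<delta>) \<alpha>" and "b \<equiv> ratio (sig \<alpha> \<beta> \<gamma> \<delta>) \<beta>"
    and "c \<equiv> ratio (sig \<alpha> \<beta> \<gamma> \<delta>) \<gamma>" and "d \<equiv> ratio (sig \<alpha> \<beta> \<gamma> \<delta>) \<delta>"
  shows "sin (sig \<alpha> \<beta> \<gamma> \<delta> - \<alpha>) \<noteq> 0 \<and> sin (sig \<alpha> \<beta> \<gamma> \<delta> - \<beta>) \<noteq> 0 \<and> sin (sig \<alpha> \<beta> \<gamma> \<delta> - \<gamma>) \<noteq> 0 \<and> sin (sig \<alpha> \<beta> \<gamma> \<delta> - \<delta>) \<noteq> 0 \<and>
    a * b \<notin> {0, 1} \<and> a * c \<notin> {0, 1} \<and> a * d \<notin> {0, 1} \<and>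
    b * c \<notin> {0, 1} \<and> b * d \<notin> {0, 1} \<and> c * d \<notin> {0, 1} \<and>
    a * b * c * d \<notin> {0, 1}"
proof -
  have n1: "\<And>k::int. \<alpha>+\<beta>+\<gamma>+\<delta> \<noteq> 2*pi*of_int k"
  proof -
    fix k :: int
    have "\<alpha> + (1) * \<beta> + (1) * \<gamma> + (1) * \<delta> \<noteq> 2 * pi * of_int k"
      "\<alpha> + (1) * \<beta> + (1) * \<gamma> + (1) * \<delta> \<noteq> 2 * pi * of_int (-k)"
      by (rule nondeg; simp)+
    then show "\<alpha>+\<beta>+\<gamma>+\<delta> \<noteq> 2*pi*of_int k" by (auto simp: algebra_simps)
  qed
  have n2: "\<And>k::int. \<alpha>+\<beta>-\<gamma>-\<delta> \<noteq> 2*pi*of_int k"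
  proof -
    fix k :: int
    have "\<alpha> + (1) * \<beta> + (-1) * \<gamma> + (-1) * \<delta> \<noteq> 2 * pi * of_int k"
      "\<alpha> + (1) * \<beta> + (-1) * \<gamma> + (-1) * \<delta> \<noteq> 2 * pi * of_int (-k)"
      by (rule nondeg; simp)+
    then show "\<alpha>+\<beta>-\<gamma>-\<delta> \<noteq> 2*pi*of_int k" by (auto simp: algebra_simps)
  qed
  have n3: "\<And>k::int. \<alpha>+\<gamma>-\<beta>-\<delta> \<noteq> 2*pi*of_int k"
  proof -
    fix k :: int
    have "\<alpha> + (-1) * \<beta> + (1) * \<gamma> + (-1) * \<delta> \<noteq> 2 * pi * of_int k"
      "\<alpha> + (-1) * \<beta> + (1) * \<gamma> + (-1) * \<delta> \<noteq> 2 * pi * of_int (-k)"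
      by (rule nondeg; simp)+
    then show "\<alpha>+\<gamma>-\<beta>-\<delta> \<noteq> 2*pi*of_int k" by (auto simp: algebra_simps)
  qed
  have n4: "\<And>k::int. \<alpha>+\<delta>-\<beta>-\<gamma> \<noteq> 2*pi*of_int k"
  proof -
    fix k :: int
    have "\<alpha> + (-1) * \<beta> + (-1) * \<gamma> + (1) * \<delta> \<noteq> 2 * pi * of_int k"
      "\<alpha> + (-1) * \<beta> + (-1) * \<gamma> + (1) * \<delta> \<noteq> 2 * pi * of_int (-k)"
      by (rule nondeg; simp)+
    then show "\<alpha>+\<delta>-\<beta>-\<gamma> \<noteq> 2*pi*of_int k" by (auto simp: algebra_simps)
  qed
  have n5: "\<And>k::int. \<beta>+\<gamma>-\<alpha>-\<delta> \<noteq> 2*pi*of_int k"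
  proof -
    fix k :: int
    have "\<alpha> + (-1) * \<beta> + (-1) * \<gamma> + (1) * \<delta> \<noteq> 2 * pi * of_int k"
      "\<alpha> + (-1) * \<beta> + (-1) * \<gamma> + (1) * \<delta> \<noteq> 2 * pi * of_int (-k)"
      by (rule nondeg; simp)+
    then show "\<beta>+\<gamma>-\<alpha>-\<delta> \<noteq> 2*pi*of_int k" by (auto simp: algebra_simps)
  qed
  have n6: "\<And>k::int. \<beta>+\<delta>-\<alpha>-\<gamma> \<noteq> 2*pi*of_int k"
  proof -
    fix k :: int
    have "\<alpha> + (-1) * \<beta> + (1) * \<gamma> + (-1) * \<delta> \<noteq> 2 * pi * of_int k"
      "\<alpha> + (-1) * \<beta> + (1) * \<gamma> + (-1) * \<delta> \<noteq> 2 * pi * of_int (-k)"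
      by (rule nondeg; simp)+
    then show "\<beta>+\<delta>-\<alpha>-\<gamma> \<noteq> 2*pi*of_int k" by (auto simp: algebra_simps)
  qed
  have n7: "\<And>k::int. \<gamma>+\<delta>-\<alpha>-\<beta> \<noteq> 2*pi*of_int k"
  proof -
    fix k :: int
    have "\<alpha> + (1) * \<beta> + (-1) * \<gamma> + (-1) * \<delta> \<noteq> 2 * pi * of_int k"
      "\<alpha> + (1) * \<beta> + (-1) * \<gamma> + (-1) * \<delta> \<noteq> 2 * pi * of_int (-k)"
      by (rule nondeg; simp)+
    then show "\<gamma>+\<delta>-\<alpha>-\<beta> \<noteq> 2*pi*of_int k" by (auto simp: algebra_simps)
  qed
  have n8: "\<And>k::int. \<gamma>+\<delta>+\<alpha>+\<beta> \<noteq> 2*pi*of_int k"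
  proof -
    fix k :: int
    have "\<alpha> + (1) * \<beta> + (1) * \<gamma> + (1) * \<delta> \<noteq> 2 * pi * of_int k"
      "\<alpha> + (1) * \<beta> + (1) * \<gamma> + (1) * \<delta> \<noteq> 2 * pi * of_int (-k)"
      by (rule nondeg; simp)+
    then show "\<gamma>+\<delta>+\<alpha>+\<beta> \<noteq> 2*pi*of_int k" by (auto simp: algebra_simps)
  qed
  have n9: "\<And>k::int. \<alpha>-\<beta>+\<gamma>-\<delta> \<noteq> 2*pi*of_int k"
  proof -
    fix k :: int
    have "\<alpha> + (-1) * \<beta> + (1) * \<gamma> + (-1) * \<delta> \<noteq> 2 * pi * of_int k"
      "\<alpha> + (-1) * \<beta> + (1) * \<gamma> + (-1) * \<delta> \<noteq> 2 * pi * of_int (-k)"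
      by (rule nondeg; simp)+
    then show "\<alpha>-\<beta>+\<gamma>-\<delta> \<noteq> 2*pi*of_int k" by (auto simp: algebra_simps)
  qed
  have n10: "\<And>k::int. \<alpha>-\<beta>-\<gamma>+\<delta> \<noteq> 2*pi*of_int k"
  proof -
    fix k :: int
    have "\<alpha> + (-1) * \<beta> + (-1) * \<gamma> + (1) * \<delta> \<noteq> 2 * pi * of_int k"
      "\<alpha> + (-1) * \<beta> + (-1) * \<gamma> + (1) * \<delta> \<noteq> 2 * pi * of_int (-k)"
      by (rule nondeg; simp)+
    then show "\<alpha>-\<beta>-\<gamma>+\<delta> \<noteq> 2*pi*of_int k" by (auto simp: algebra_simps)
  qed
  have m1: "\<And>k::int. \<alpha>-\<beta>-\<gamma>-\<delta> \<noteq> 2*pi*of_int k"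
  proof -
    fix k :: int
    have "\<alpha> + (-1) * \<beta> + (-1) * \<gamma> + (-1) * \<delta> \<noteq> 2 * pi * of_int k"
      "\<alpha> + (-1) * \<beta> + (-1) * \<gamma> + (-1) * \<delta> \<noteq> 2 * pi * of_int (-k)"
      by (rule nondeg; simp)+
    then show "\<alpha>-\<beta>-\<gamma>-\<delta> \<noteq> 2*pi*of_int k" by (auto simp: algebra_simps)
  qed
  have m2: "\<And>k::int. \<alpha>-\<beta>+\<gamma>+\<delta> \<noteq> 2*pi*of_int k"
  proof -
    fix k :: int
    have "\<alpha> + (-1) * \<beta> + (1) * \<gamma> + (1) * \<delta> \<noteq> 2 * pi * of_int k"
      "\<alpha> + (-1) * \<beta> + (1) * \<gamma> + (1) * \<delta> \<noteq> 2 * pi * of_int (-k)"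
      by (rule nondeg; simp)+
    then show "\<alpha>-\<beta>+\<gamma>+\<delta> \<noteq> 2*pi*of_int k" by (auto simp: algebra_simps)
  qed
  have m3: "\<And>k::int. \<alpha>+\<beta>-\<gamma>+\<delta> \<noteq> 2*pi*of_int k"
  proof -
    fix k :: int
    have "\<alpha> + (1) * \<beta> + (-1) * \<gamma> + (1) * \<delta> \<noteq> 2 * pi * of_int k"
      "\<alpha> + (1) * \<beta> + (-1) * \<gamma> + (1) * \<delta> \<noteq> 2 * pi * of_int (-k)"
      by (rule nondeg; simp)+
    then show "\<alpha>+\<beta>-\<gamma>+\<delta> \<noteq> 2*pi*of_int k" by (auto simp: algebra_simps)
  qed
  have m4: "\<And>k::int. \<alpha>+\<beta>+\<gamma>-\<delta> \<noteq> 2*pi*of_int k"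
  proof -
    fix k :: int
    have "\<alpha> + (1) * \<beta> + (1) * \<gamma> + (-1) * \<delta> \<noteq> 2 * pi * of_int k"
      "\<alpha> + (1) * \<beta> + (1) * \<gamma> + (-1) * \<delta> \<noteq> 2 * pi * of_int (-k)"
      by (rule nondeg; simp)+
    then show "\<alpha>+\<beta>+\<gamma>-\<delta> \<noteq> 2*pi*of_int k" by (auto simp: algebra_simps)
  qed
  have n11: "\<And>k::int. \<beta>+\<gamma>+\<alpha>+\<delta> \<noteq> 2*pi*of_int k"
  proof -
    fix k :: int
    have "\<alpha> + (1) * \<beta> + (1) * \<gamma> + (1) * \<delta> \<noteq> 2 * pi * of_int k"
      "\<alpha> + (1) * \<beta> + (1) * \<gamma> + (1) * \<delta> \<noteq> 2 * pi * of_int (-k)"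
      by (rule nondeg; simp)+
    then show "\<beta>+\<gamma>+\<alpha>+\<delta> \<noteq> 2*pi*of_int k" by (auto simp: algebra_simps)
  qed
  have n12: "\<And>k::int. \<beta>+\<delta>+\<alpha>+\<gamma> \<noteq> 2*pi*of_int k"
  proof -
    fix k :: int
    have "\<alpha> + (1) * \<beta> + (1) * \<gamma> + (1) * \<delta> \<noteq> 2 * pi * of_int k"
      "\<alpha> + (1) * \<beta> + (1) * \<gamma> + (1) * \<delta> \<noteq> 2 * pi * of_int (-k)"
      by (rule nondeg; simp)+
    then show "\<beta>+\<delta>+\<alpha>+\<gamma> \<noteq> 2*pi*of_int k" by (auto simp: algebra_simps)
  qed
  have n13: "\<And>k::int. \<alpha>+\<gamma>+\<beta>+\<delta> \<noteq> 2*pi*of_int k"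
  proof -
    fix k :: int
    have "\<alpha> + (1) * \<beta> + (1) * \<gamma> + (1) * \<delta> \<noteq> 2 * pi * of_int k"
      "\<alpha> + (1) * \<beta> + (1) * \<gamma> + (1) * \<delta> \<noteq> 2 * pi * of_int (-k)"
      by (rule nondeg; simp)+
    then show "\<alpha>+\<gamma>+\<beta>+\<delta> \<noteq> 2*pi*of_int k" by (auto simp: algebra_simps)
  qed
  have n14: "\<And>k::int. \<alpha>+\<delta>+\<beta>+\<gamma> \<noteq> 2*pi*of_int k"
  proof -
    fix k :: int
    have "\<alpha> + (1) * \<beta> + (1) * \<gamma> + (1) * \<delta> \<noteq> 2 * pi * of_int k"
      "\<alpha> + (1) * \<beta> + (1) * \<gamma> + (1) * \<delta> \<noteq> 2 * pi * of_int (-k)"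
      by (rule nondeg; simp)+
    then show "\<alpha>+\<delta>+\<beta>+\<gamma> \<noteq> 2*pi*of_int k" by (auto simp: algebra_simps)
  qed
  have sa: "sin (sig \<alpha> \<beta> \<gamma> \<delta> - \<alpha>) \<noteq> 0"
  proof
    assume "sin (sig \<alpha> \<beta> \<gamma> \<delta> - \<alpha>) = 0"
    then obtain i :: int where "sig \<alpha> \<beta> \<gamma> \<delta> - \<alpha> = of_int i * pi" by (auto simp: sin_zero_iff_int2)
    then have "\<alpha>-\<beta>-\<gamma>-\<delta> = 2*pi*of_int (-i) \<or> \<alpha>-\<beta>-\<gamma>-\<delta> = 2*pi*of_int i" by (simp add: sig_def field_simps)
    then show False using m1 by blast
  qed
  have sb: "sin (sig \<alpha> \<beta> \<gamma> \<delta> - \<beta>) \<noteq> 0"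
  proof
    assume "sin (sig \<alpha> \<beta> \<gamma> \<delta> - \<beta>) = 0"
    then obtain i :: int where "sig \<alpha> \<beta> \<gamma> \<delta> - \<beta> = of_int i * pi" by (auto simp: sin_zero_iff_int2)
    then have "\<alpha>-\<beta>+\<gamma>+\<delta> = 2*pi*of_int (-i) \<or> \<alpha>-\<beta>+\<gamma>+\<delta> = 2*pi*of_int i" by (simp add: sig_def field_simps)
    then show False using m2 by blast
  qed
  have sc: "sin (sig \<alpha> \<beta> \<gamma> \<delta> - \<gamma>) \<noteq> 0"
  proof
    assume "sin (sig \<alpha> \<beta> \<gamma> \<delta> - \<gamma>) = 0"
    then obtain i :: int where "sig \<alpha> \<beta> \<gamma> \<delta> - \<gamma> = of_int i * pi" by (auto simp: sin_zero_iff_int2)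
    then have "\<alpha>+\<beta>-\<gamma>+\<delta> = 2*pi*of_int (-i) \<or> \<alpha>+\<beta>-\<gamma>+\<delta> = 2*pi*of_int i" by (simp add: sig_def field_simps)
    then show False using m3 by blast
  qed
  have sd: "sin (sig \<alpha> \<beta> \<gamma> \<delta> - \<delta>) \<noteq> 0"
  proof
    assume "sin (sig \<alpha> \<beta> \<gamma> \<delta> - \<delta>) = 0"
    then obtain i :: int where "sig \<alpha> \<beta> \<gamma> \<delta> - \<delta> = of_int i * pi" by (auto simp: sin_zero_iff_int2)
    then have "\<alpha>+\<beta>+\<gamma>-\<delta> = 2*pi*of_int (-i) \<or> \<alpha>+\<beta>+\<gamma>-\<delta> = 2*pi*of_int i" by (simp add: sig_def field_simps)
    then show False using m4 by blast
  qed
  have pa: "sin \<alpha> \<noteq> 0" using range(1) by (simp add: sin_gt_zero less_imp_neq[symmetric])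
  have pb: "sin \<beta> \<noteq> 0" using range(2) by (simp add: sin_gt_zero less_imp_neq[symmetric])
  have pc: "sin \<gamma> \<noteq> 0" using range(3) by (simp add: sin_gt_zero less_imp_neq[symmetric])
  have pd: "sin \<delta> \<noteq> 0" using range(4) by (simp add: sin_gt_zero less_imp_neq[symmetric])
  have S: "\<And>x y z w. x+y+z+w = \<alpha>+\<beta>+\<gamma>+\<delta> \<Longrightarrow> x+y+z+w = 2 * sig \<alpha> \<beta> \<gamma> \<delta>" by (simp add: sig_def)
  have ab: "a * b \<notin> {0,1}" unfolding a_def b_def by (rule pairlem[OF pa pb sa sb S n1 n2]) simp
  have ac: "a * c \<notin> {0,1}" unfolding a_def c_def by (rule pairlem[OF pa pc sa sc S n13 n3]) simp
  have ad: "a * d \<notin> {0,1}" unfolding a_def d_def by (rule pairlem[OF pa pd sa sd S n14 n4]) simp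
  have bc: "b * c \<notin> {0,1}" unfolding b_def c_def by (rule pairlem[OF pb pc sb sc S n11 n5]) simp
  have bd: "b * d \<notin> {0,1}" unfolding b_def d_def by (rule pairlem[OF pb pd sb sd S n12 n6]) simp
  have cd: "c * d \<notin> {0,1}" unfolding c_def d_def by (rule pairlem[OF pc pd sc sd S n8 n7]) simp
  have M: "a * b * c * d \<notin> {0,1}" unfolding a_def b_def c_def d_def
    by (rule quadlem[OF pa pb pc pd sa sb sc sd S n1 n2 n9 n10]) simp
  show ?thesis using sa sb sc sd ab ac ad bc bd cd M by blast
qed

end
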